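(* Let $q \geq 4$ be a prime power and let $\mathcal{E} = \{ \widetilde{E}(u) : u \in \mathcal{D}_q \}$. Then \[ \theta(\mathcal{E}) = \begin{cases} 2(q-1) & \text{if } q-1 \not\equiv 0 \pmod 3,\\ 0 & \text{if } q-1 \equiv 0 \pmod 3. \end{cases} \] Equivalently, $\min\{ |\widetilde{E}(u) \cap \widetilde{E}(v)| : u,v \in \mathcal{D}_q\}$ equals $2(q-1)$ if $3 \nmid q-1$ and equals $0$ if $3 \mid q-1$.
   Context: $\mathbb{F}_q$ is the finite field with $q$ elements. For $u=(u_1,u_2,u_3), v=(v_1,v_2,v_3) \in \mathbb{F}_q^3$ the Hamming distance is $d(u,v)=|\{i : u_i \neq v_i\}|$, and $B(u)=\{v \in \mathbb{F}_q^3 : d(u,v)\le 1\}$. The extended ball of $u$ is $E(u)=\bigcup_{\lambda \in \mathbb{F}_q} B(\lambda u)$. Let $\mathcal{D}_q=\{(u_1,u_2,u_3)\in\mathbb{F}_q^3 : u_1,u_2,u_3 \text{ pairwise distinct and nonzero}\}$ and $\widetilde{E}(u)=E(u)\cap \mathcal{D}_q$. A family $\mathcal{F}=\{A_1,\dots,A_m\}$ of sets is $t$-intersecting if $|A_i\cap A_j|\ge t$ for all $i\ne j$, and $\theta(\mathcal{F})=\max\{t : \mathcal{F} \text{ is } t\text{-intersecting}\}$ (i.e. the minimum of $|A_i\cap A_j|$ over pairs of members, here indexed by pairs $u,v\in\mathcal{D}_q$). *)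

theory Defs
  imports Main "HOL-Library.Cardinality"
begin

type_synonym 'a vec3 = "'a \<times> 'a \<times> 'a"

definition coords :: "'a vec3 \<Rightarrow> 'a list" where
  "coords u = (case u of (a, b, c) \<Rightarrow> [a, b, c])"

definition hdist :: "'a vec3 \<Rightarrow> 'a vec3 \<Rightarrow> nat" where
  "hdist u v = card {i::nat. i < 3 \<and> coords u ! i \<noteq> coords v ! i}"

definition scale3 :: "'a::field \<Rightarrow> 'a vec3 \<Rightarrow> 'a vec3" where
  "scale3 l u = (case u of (a, b, c) \<Rightarrow> (l * a, l * b, l * c))"

definition hball :: "'a vec3 \<Rightarrow> 'a vec3 set" where
  "hball u = {v. hdist u v \<le> 1}"

definition ext_ball :: "'a::field vec3 \<Rightarrow> 'a vec3 set" where
  "ext_ball u = (\<Union>l. hball (scale3 l u))"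

definition Dq :: "'a::field vec3 set" where
  "Dq = {(a, b, c). a \<noteq> b \<and> b \<noteq> c \<and> a \<noteq> c \<and> a \<noteq> 0 \<and> b \<noteq> 0 \<and> c \<noteq> 0}"

definition ext_ball_D :: "'a::field vec3 \<Rightarrow> 'a vec3 set" where
  "ext_ball_D u = ext_ball u \<inter> Dq"

definition theta :: "'i set \<Rightarrow> ('i \<Rightarrow> 'b set) \<Rightarrow> nat" where
  "theta I A = Min {card (A i \<inter> A j) | i j. i \<in> I \<and> j \<in> I \<and> i \<noteq> j}"

end

theory Submission
  imports Defs "HOL-Computational_Algebra.Polynomial"
begin

lemma hdist_le1:
  "hdist (a,b,c) (a',b',c') \<le> 1 \<longleftrightarrow> (a=a' \<and> b=b') \<or> (a=a' \<and> c=c') \<or> (b=b' \<and> c=c')"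
proof -
  have S: "{i::nat. i < 3 \<and> coords (a,b,c) ! i \<noteq> coords (a',b',c') ! i} =
     (if a \<noteq> a' then {0} else {}) \<union> (if b \<noteq> b' then {1} else {}) \<union> (if c \<noteq> c' then {2} else {})"
    by (auto simp: coords_def less_Suc_eq numeral_3_eq_3 split: if_splits)
  show ?thesis unfolding hdist_def S by (auto split: if_splits)
qed

lemma hdist_le1':
  "hdist (a,b,c) (a',b',c') \<le> Suc 0 \<longleftrightarrow> (a=a' \<and> b=b') \<or> (a=a' \<and> c=c') \<or> (b=b' \<and> c=c')"
  using hdist_le1 by simp

definition good :: "'a::field \<Rightarrow> 'a \<Rightarrow> bool" where
  "good g h \<longleftrightarrow> g \<noteq> 0 \<and> h \<noteq> 0 \<and> g \<noteq> 1 \<and> h \<noteq> 1 \<and> g \<noteq> h"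
definition RR :: "'a::field \<Rightarrow> 'a \<Rightarrow> 'a \<Rightarrow> 'a \<Rightarrow> bool" where
  "RR g h x y \<longleftrightarrow> g = x \<or> h = y \<or> g * y = h * x"

lemma core:
  fixes x y p r :: "'a::field"
  assumes tors: "\<And>z::'a. z*z*z = 1 \<Longrightarrow> z = 1"
    and gu: "good x y" and gv: "good p r" and ne: "(x,y) \<noteq> (p,r)"
  shows "\<exists>g h g' h'. good g h \<and> good g' h' \<and> (g,h) \<noteq> (g',h') \<and> RR g h x y \<and> RR g h p r
           \<and> RR g' h' x y \<and> RR g' h' p r"
proof -
  have nz: "x \<noteq> 0" "y \<noteq> 0" "p \<noteq> 0" "r \<noteq> 0" "x \<noteq> 1" "y \<noteq> 1" "p \<noteq> 1" "r \<noteq> 1" "x \<noteq> y" "p \<noteq> r"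
    using gu gv by (auto simp: good_def)
  have fin0: "\<And>g h g' h'. good g h \<Longrightarrow> good g' h' \<Longrightarrow> (g,h)\<noteq>(g',h') \<Longrightarrow> RR g h x y \<Longrightarrow> RR g h p r
     \<Longrightarrow> RR g' h' x y \<Longrightarrow> RR g' h' p r \<Longrightarrow> ?thesis" by blast
  have c3: "x*x*x \<noteq> 1" "y*y*y \<noteq> 1" "p*p*p \<noteq> 1" "r*r*r \<noteq> 1" using tors nz by blast+
  define A where "A = (x, r)"
  define B where "B = (p, y)"
  define C where "C = (x, x*r/p)"
  define D where "D = (p, p*y/x)"
  define E where "E = (y*p/r, y)"
  define F where "F = (r*x/y, r)"
  have RA: "RR (fst A) (snd A) x y" "RR (fst A) (snd A) p r" by (auto simp: A_def RR_def)
  have RB: "RR (fst B) (snd B) x y" "RR (fst B) (snd B) p r" by (auto simp: B_def RR_def)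
  have RC: "RR (fst C) (snd C) x y" "RR (fst C) (snd C) p r" using nz by (auto simp: C_def RR_def)
  have RD: "RR (fst D) (snd D) x y" "RR (fst D) (snd D) p r" using nz by (auto simp: D_def RR_def)
  have RE: "RR (fst E) (snd E) x y" "RR (fst E) (snd E) p r" using nz by (auto simp: E_def RR_def)
  have RF: "RR (fst F) (snd F) x y" "RR (fst F) (snd F) p r" using nz by (auto simp: F_def RR_def)
  have fin: "\<And>P Q. good (fst P) (snd P) \<Longrightarrow> good (fst Q) (snd Q) \<Longrightarrow> P \<noteq> Q \<Longrightarrow>
     RR (fst P) (snd P) x y \<Longrightarrow> RR (fst P) (snd P) p r \<Longrightarrow> RR (fst Q) (snd Q) x y \<Longrightarrow> RR (fst Q) (snd Q) p r
     \<Longrightarrow> ?thesis"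
    by (metis fin0 prod.collapse)
  have AB: "A \<noteq> B" using ne by (auto simp: A_def B_def)
  have CD: "C \<noteq> D"
  proof
    assume "C = D"
    then have "x = p" "x*r/p = p*y/x" by (auto simp: C_def D_def)
    then show False using ne nz by simp
  qed
  have EF: "E \<noteq> F"
  proof
    assume "E = F"
    then have "y = r" "y*p/r = r*x/y" by (auto simp: E_def F_def)
    then show False using ne nz by simp
  qed
  have bA: "\<not> good (fst A) (snd A) \<Longrightarrow> x = r" using nz by (auto simp: A_def good_def)
  have bB: "\<not> good (fst B) (snd B) \<Longrightarrow> p = y" using nz by (auto simp: B_def good_def)
  have bC: "\<not> good (fst C) (snd C) \<Longrightarrow> x * r = p" using nz by (auto simp: C_def good_def field_simps)
  have bD: "\<not> good (fst D) (snd D) \<Longrightarrow> p * y = x" using nz by (auto simp: D_def good_def field_simps)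
  have bE: "\<not> good (fst E) (snd E) \<Longrightarrow> y * p = r" using nz by (auto simp: E_def good_def field_simps)
  have bF: "\<not> good (fst F) (snd F) \<Longrightarrow> r * x = y" using nz by (auto simp: F_def good_def field_simps)
  have gA: "x \<noteq> r \<Longrightarrow> good (fst A) (snd A)" using nz by (auto simp: A_def good_def)
  have gB: "p \<noteq> y \<Longrightarrow> good (fst B) (snd B)" using nz by (auto simp: B_def good_def)
  have gC: "x * r \<noteq> p \<Longrightarrow> good (fst C) (snd C)" using nz by (auto simp: C_def good_def field_simps)
  have gD: "p * y \<noteq> x \<Longrightarrow> good (fst D) (snd D)" using nz by (auto simp: D_def good_def field_simps)
  have gE: "y * p \<noteq> r \<Longrightarrow> good (fst E) (snd E)" using nz by (auto simp: E_def good_def field_simps)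
  have gF: "r * x \<noteq> y \<Longrightarrow> good (fst F) (snd F)" using nz by (auto simp: F_def good_def field_simps)
  show ?thesis
  proof (cases "good (fst A) (snd A) \<and> good (fst B) (snd B)")
    case True then show ?thesis using fin AB RA RB by blast
  next
    case nAB: False
    show ?thesis
    proof (cases "good (fst C) (snd C) \<and> good (fst D) (snd D)")
      case True then show ?thesis using fin CD RC RD by blast
    next
      case nCD: False
      show ?thesis
      proof (cases "good (fst E) (snd E) \<and> good (fst F) (snd F)")
        case True then show ?thesis using fin EF RE RF by blast
      next
        case nEF: False
        have h1: "x = r \<or> p = y" using nAB bA bB by blast
        have h2: "x*r = p \<or> p*y = x" using nCD bC bD by blast
        have h3: "y*p = r \<or> r*x = y" using nEF bE bF by blast
        consider (ACE) "x = r" "x*r = p" "y*p = r" | (ACF) "x = r" "x*r = p" "r*x = y"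
          | (ADE) "x = r" "p*y = x" "y*p = r" | (ADF) "x = r" "p*y = x" "r*x = y"
          | (BCE) "p = y" "x*r = p" "y*p = r" | (BCF) "p = y" "x*r = p" "r*x = y"
          | (BDE) "p = y" "p*y = x" "y*p = r" | (BDF) "p = y" "p*y = x" "r*x = y"
          using h1 h2 h3 by argo
        then show ?thesis
        proof cases
          case ACE
          have eq: "r = x" "p = x*x" "y = inverse x" using ACE nz by (auto simp: field_simps)
          show ?thesis
          proof (rule fin[OF _ _ _ RB RF])
            show "good (fst B) (snd B)" using nz c3 unfolding B_def good_def by (auto simp: eq field_simps)
            show "good (fst F) (snd F)" using nz c3 unfolding F_def good_def by (auto simp: eq field_simps)
            show "B \<noteq> F" using nz c3 unfolding B_def F_def by (auto simp: eq field_simps)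
          qed
        next
          case ACF
          have eq: "r = x" "p = x*x" "y = x*x" using ACF nz by (auto simp: field_simps)
          show ?thesis
          proof (rule fin[OF _ _ _ RD RE])
            show "good (fst D) (snd D)" using nz c3 unfolding D_def good_def by (auto simp: eq field_simps)
            show "good (fst E) (snd E)" using nz c3 unfolding E_def good_def by (auto simp: eq field_simps)
            show "D \<noteq> E" using nz c3 unfolding D_def E_def by (auto simp: eq field_simps)
          qed
        next
          case ADE
          show ?thesis
          proof (cases "p = y")
            case True
            have eq: "y = p" "x = p*p" "r = p*p" using ADE True nz by (auto simp: field_simps)
            show ?thesis
            proof (rule fin[OF _ _ _ RC RF])
              show "good (fst C) (snd C)" using nz c3 unfolding C_def good_def by (auto simp: eq field_simps)
              show "good (fst F) (snd F)" using nz c3 unfolding F_def good_def by (auto simp: eq field_simps)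
              show "C \<noteq> F" using nz c3 unfolding C_def F_def by (auto simp: eq field_simps)
            qed
          next
            case pny: False
            show ?thesis
            proof (cases "x * r = p")
              case False
              have "B \<noteq> C"
              proof
                assume "B = C"
                then have "p = x" by (simp add: B_def C_def)
                then show False using ADE nz by simp
              qed
              then show ?thesis using fin[OF gB[OF pny] gC[OF False] _ RB RC] by blast
            next
              case True
              have "r * x \<noteq> y" using True ADE pny by (simp add: mult.commute)
              have "B \<noteq> F"
              proof
                assume "B = F"
                then have "y = r" by (simp add: B_def F_def)
                then show False using ADE nz by simp
              qed
              then show ?thesis using fin[OF gB[OF pny] gF[OF \<open>r * x \<noteq> y\<close>] _ RB RF] by blast
            qed
          qed
        next
          case ADF
          have eq: "r = x" "y = x*x" "p = inverse x" using ADF nz by (auto simp: field_simps)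
          show ?thesis
          proof (rule fin[OF _ _ _ RB RC])
            show "good (fst B) (snd B)" using nz c3 unfolding B_def good_def by (auto simp: eq field_simps)
            show "good (fst C) (snd C)" using nz c3 unfolding C_def good_def by (auto simp: eq field_simps)
            show "B \<noteq> C" using nz c3 unfolding B_def C_def by (auto simp: eq field_simps)
          qed
        next
          case BCE
          have eq: "y = p" "r = p*p" "x = inverse p" using BCE nz by (auto simp: field_simps)
          show ?thesis
          proof (rule fin[OF _ _ _ RA RD])
            show "good (fst A) (snd A)" using nz c3 unfolding A_def good_def by (auto simp: eq field_simps)
            show "good (fst D) (snd D)" using nz c3 unfolding D_def good_def by (auto simp: eq field_simps)
            show "A \<noteq> D" using nz c3 unfolding A_def D_def by (auto simp: eq field_simps)
          qed
        next
          case BCF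
          show ?thesis
          proof (cases "x = r")
            case True
            have eq: "r = x" "p = x*x" "y = x*x" using BCF True nz by (auto simp: field_simps)
            show ?thesis
            proof (rule fin[OF _ _ _ RD RE])
              show "good (fst D) (snd D)" using nz c3 unfolding D_def good_def by (auto simp: eq field_simps)
              show "good (fst E) (snd E)" using nz c3 unfolding E_def good_def by (auto simp: eq field_simps)
              show "D \<noteq> E" using nz c3 unfolding D_def E_def by (auto simp: eq field_simps)
            qed
          next
            case xnr: False
            show ?thesis
            proof (cases "p * y = x")
              case False
              have "A \<noteq> D"
              proof
                assume "A = D"
                then have "p = x" by (simp add: A_def D_def)
                then show False using BCF nz by simp
              qed
              then show ?thesis using fin[OF gA[OF xnr] gD[OF False] _ RA RD] by blast
            next
              case True
              have "y * p \<noteq> r" using True BCF xnr by (simp add: mult.commute)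
              have "A \<noteq> E"
              proof
                assume "A = E"
                then have "y = r" by (simp add: A_def E_def)
                then show False using BCF nz by simp
              qed
              then show ?thesis using fin[OF gA[OF xnr] gE[OF \<open>y * p \<noteq> r\<close>] _ RA RE] by blast
            qed
          qed
        next
          case BDE
          have eq: "y = p" "x = p*p" "r = p*p" using BDE nz by (auto simp: field_simps)
          show ?thesis
          proof (rule fin[OF _ _ _ RC RF])
            show "good (fst C) (snd C)" using nz c3 unfolding C_def good_def by (auto simp: eq field_simps)
            show "good (fst F) (snd F)" using nz c3 unfolding F_def good_def by (auto simp: eq field_simps)
            show "C \<noteq> F" using nz c3 unfolding C_def F_def by (auto simp: eq field_simps)
          qed
        next
          case BDF
          have eq: "y = p" "x = p*p" "r = inverse p" using BDF nz by (auto simp: field_simps)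
          show ?thesis
          proof (rule fin[OF _ _ _ RA RE])
            show "good (fst A) (snd A)" using nz c3 unfolding A_def good_def by (auto simp: eq field_simps)
            show "good (fst E) (snd E)" using nz c3 unfolding E_def good_def by (auto simp: eq field_simps)
            show "A \<noteq> E" using nz c3 unfolding A_def E_def by (auto simp: eq field_simps)
          qed
        qed
      qed
    qed
  qed
qed

lemma Dq_iff: "(a,b,c) \<in> Dq \<longleftrightarrow> a\<noteq>b \<and> b\<noteq>c \<and> a\<noteq>c \<and> a\<noteq>0 \<and> b\<noteq>0 \<and> c\<noteq>0"
  by (simp add: Dq_def)

definition agr3 :: "'a::field \<Rightarrow> 'a \<Rightarrow> 'a \<Rightarrow> 'a \<Rightarrow> 'a \<Rightarrow> 'a \<Rightarrow> bool" where
  "agr3 w1 w2 w3 u1 u2 u3 \<longleftrightarrow> w1*u2 = w2*u1 \<or> w2*u3 = w3*u2 \<or> w1*u3 = w3*u1"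

lemma mem_eb:
  fixes u1 u2 u3 :: "'a::field"
  assumes "(u1,u2,u3) \<in> Dq"
  shows "(w1,w2,w3) \<in> ext_ball_D (u1,u2,u3) \<longleftrightarrow> (w1,w2,w3) \<in> Dq \<and> agr3 w1 w2 w3 u1 u2 u3"
proof -
  have nz: "u1 \<noteq> 0" "u2 \<noteq> 0" "u3 \<noteq> 0" using assms by (auto simp: Dq_iff)
  have e: "(w1,w2,w3) \<in> ext_ball (u1,u2,u3) \<longleftrightarrow>
     (\<exists>l. (l*u1 = w1 \<and> l*u2 = w2) \<or> (l*u1 = w1 \<and> l*u3 = w3) \<or> (l*u2 = w2 \<and> l*u3 = w3))"
    by (simp add: ext_ball_def hball_def scale3_def hdist_le1 hdist_le1')
  have "(\<exists>l. (l*u1 = w1 \<and> l*u2 = w2) \<or> (l*u1 = w1 \<and> l*u3 = w3) \<or> (l*u2 = w2 \<and> l*u3 = w3))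
        \<longleftrightarrow> agr3 w1 w2 w3 u1 u2 u3"
  proof
    assume "\<exists>l. (l*u1 = w1 \<and> l*u2 = w2) \<or> (l*u1 = w1 \<and> l*u3 = w3) \<or> (l*u2 = w2 \<and> l*u3 = w3)"
    then obtain l where "(l*u1 = w1 \<and> l*u2 = w2) \<or> (l*u1 = w1 \<and> l*u3 = w3) \<or> (l*u2 = w2 \<and> l*u3 = w3)"
      by blast
    then show "agr3 w1 w2 w3 u1 u2 u3" unfolding agr3_def by (auto simp: mult_ac)
  next
    assume "agr3 w1 w2 w3 u1 u2 u3"
    then consider "w1*u2 = w2*u1" | "w2*u3 = w3*u2" | "w1*u3 = w3*u1" unfolding agr3_def by blast
    then show "\<exists>l. (l*u1 = w1 \<and> l*u2 = w2) \<or> (l*u1 = w1 \<and> l*u3 = w3) \<or> (l*u2 = w2 \<and> l*u3 = w3)"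
    proof cases
      case 1
      then have "(w1/u1)*u1 = w1 \<and> (w1/u1)*u2 = w2" using nz by (simp add: field_simps)
      then show ?thesis by blast
    next
      case 2
      then have "(w2/u2)*u2 = w2 \<and> (w2/u2)*u3 = w3" using nz by (simp add: field_simps)
      then show ?thesis by blast
    next
      case 3
      then have "(w1/u1)*u1 = w1 \<and> (w1/u1)*u3 = w3" using nz by (simp add: field_simps)
      then show ?thesis by blast
    qed
  qed
  then show ?thesis using e by (auto simp add: ext_ball_D_def)
qed

definition orb :: "'a::field vec3 \<Rightarrow> 'a vec3 set" where
  "orb w = (\<lambda>l. scale3 l w) ` (UNIV - {0})"

lemma scale_Dq: "w \<in> Dq \<Longrightarrow> l \<noteq> 0 \<Longrightarrow> scale3 l w \<in> Dq"
  by (cases w) (auto simp: Dq_iff scale3_def)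

lemma scale_mem:
  assumes "u \<in> Dq" "w \<in> ext_ball_D u" "(l::'a::field) \<noteq> 0"
  shows "scale3 l w \<in> ext_ball_D u"
proof -
  obtain u1 u2 u3 where u: "u = (u1,u2,u3)" by (cases u)
  obtain w1 w2 w3 where w: "w = (w1,w2,w3)" by (cases w)
  have "w \<in> Dq" "agr3 w1 w2 w3 u1 u2 u3" using assms mem_eb[of u1 u2 u3 w1 w2 w3] u w by auto
  moreover have "agr3 w1 w2 w3 u1 u2 u3 \<Longrightarrow> agr3 (l*w1) (l*w2) (l*w3) u1 u2 u3"
    unfolding agr3_def by (auto simp: mult.assoc)
  ultimately show ?thesis using assms mem_eb[of u1 u2 u3 "l*w1" "l*w2" "l*w3"] scale_Dq[of w l] u w
    by (simp add: scale3_def)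
qed

lemma card_orb:
  assumes "w \<in> Dq"
  shows "card (orb w :: 'a::{finite,field} vec3 set) = CARD('a) - 1"
proof -
  obtain w1 w2 w3 where w: "w = (w1,w2,w3)" by (cases w)
  have "w1 \<noteq> 0" using assms w by (simp add: Dq_iff)
  then have "inj_on (\<lambda>l. scale3 l w) (UNIV - {0})"
    by (auto simp: inj_on_def scale3_def w)
  then have "card (orb w) = card (UNIV - {0::'a})" by (simp add: orb_def card_image)
  also have "\<dots> = CARD('a) - 1" by (simp add: card_Diff_subset)
  finally show ?thesis .
qed

lemma orb_sub: "u \<in> Dq \<Longrightarrow> w \<in> ext_ball_D u \<Longrightarrow> orb w \<subseteq> ext_ball_D u"
  by (auto simp: orb_def intro: scale_mem)

lemma orb_disj:
  assumes "w \<in> Dq" "w' \<in> Dq" "w' \<notin> orb w"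
  shows "orb w \<inter> orb (w' :: 'a::field vec3) = {}"
proof (rule ccontr)
  assume "orb w \<inter> orb w' \<noteq> {}"
  then obtain z where "z \<in> orb w" "z \<in> orb w'" by blast
  then obtain l l' where ll: "l \<noteq> 0" "l' \<noteq> 0" "scale3 l w = scale3 l' w'" unfolding orb_def by force
  obtain w1 w2 w3 where w: "w = (w1,w2,w3)" by (cases w)
  obtain v1 v2 v3 where w': "w' = (v1,v2,v3)" by (cases w')
  have "w' = scale3 (l/l') w" using ll by (auto simp: w w' scale3_def field_simps)
  moreover have "l/l' \<noteq> 0" using ll by simp
  ultimately have "w' \<in> orb w" by (auto simp: orb_def)
  then show False using assms by simp
qed

lemma two_orb:
  fixes X :: "'a::{finite,field} vec3 set"
  assumes "w \<in> Dq" "w' \<in> Dq" "w' \<notin> orb w" "orb w \<subseteq> X" "orb w' \<subseteq> X"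
  shows "2 * (CARD('a) - 1) \<le> card X"
proof -
  have "card (orb w \<union> orb w') = card (orb w) + card (orb w')"
    using orb_disj[OF assms(1-3)] by (simp add: card_Un_disjoint)
  also have "\<dots> = 2 * (CARD('a) - 1)" using card_orb[OF assms(1)] card_orb[OF assms(2)] by simp
  finally have "card (orb w \<union> orb w') = 2 * (CARD('a) - 1)" .
  moreover have "card (orb w \<union> orb w') \<le> card X" using assms by (intro card_mono) auto
  ultimately show ?thesis by simp
qed



lemma RR_agr:
  fixes u1 :: "'a::field"
  assumes "u1 \<noteq> 0" "RR g h (u2/u1) (u3/u1)"
  shows "agr3 1 g h u1 u2 u3"
  using assms unfolding RR_def agr3_def
  by (auto simp: field_simps)

lemma lower:
  fixes u v :: "'a::{finite,field} vec3"
  assumes tors: "\<And>z::'a. z*z*z = 1 \<Longrightarrow> z = 1"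
    and q5: "CARD('a) \<ge> 5" and uD: "u \<in> Dq" and vD: "v \<in> Dq" and uv: "u \<noteq> v"
  shows "2 * (CARD('a) - 1) \<le> card (ext_ball_D u \<inter> ext_ball_D v)"
proof -
  obtain u1 u2 u3 where u: "u = (u1,u2,u3)" by (cases u)
  obtain v1 v2 v3 where v: "v = (v1,v2,v3)" by (cases v)
  have nzu: "u1 \<noteq> 0" "u2 \<noteq> 0" "u3 \<noteq> 0" "u1 \<noteq> u2" "u2 \<noteq> u3" "u1 \<noteq> u3" using uD u by (auto simp: Dq_iff)
  have nzv: "v1 \<noteq> 0" "v2 \<noteq> 0" "v3 \<noteq> 0" "v1 \<noteq> v2" "v2 \<noteq> v3" "v1 \<noteq> v3" using vD v by (auto simp: Dq_iff)
  let ?X = "ext_ball_D u \<inter> ext_ball_D v"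
  have subX: "orb w \<subseteq> ?X" if "w \<in> ext_ball_D u" "w \<in> ext_ball_D v" for w
    using orb_sub[OF uD that(1)] orb_sub[OF vD that(2)] by blast
  show ?thesis
  proof (cases "v \<in> orb u")
    case True
    then obtain l where l: "l \<noteq> 0" "v = (l*u1, l*u2, l*u3)" by (auto simp: orb_def scale3_def u)
    have "\<not> (UNIV \<subseteq> {0, u1, u2, u3})"
    proof
      assume "UNIV \<subseteq> {0, u1, u2, u3}"
      then have "CARD('a) \<le> card {0, u1, u2, u3}" by (intro card_mono) auto
      also have "\<dots> \<le> 4" using card_length[of "[0,u1,u2,u3]"] by simp
      finally show False using q5 by simp
    qed
    then obtain z where z: "z \<noteq> 0" "z \<noteq> u1" "z \<noteq> u2" "z \<noteq> u3" by blast
    define w' where "w' = (z, u2, u3)"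
    have w'D: "w' \<in> Dq" using z nzu by (auto simp: w'_def Dq_iff)
    have "u \<in> ext_ball_D u" using mem_eb[of u1 u2 u3 u1 u2 u3] uD u by (auto simp: agr3_def mult.commute)
    moreover have "u \<in> ext_ball_D v" using mem_eb[of "l*u1" "l*u2" "l*u3" u1 u2 u3] vD uD u l
      by (auto simp: agr3_def mult_ac)
    moreover have "w' \<in> ext_ball_D u" using mem_eb[of u1 u2 u3 z u2 u3] uD u w'D
      by (auto simp: agr3_def mult_ac w'_def)
    moreover have "w' \<in> ext_ball_D v" using mem_eb[of "l*u1" "l*u2" "l*u3" z u2 u3] vD u l w'D
      by (auto simp: agr3_def mult_ac w'_def)
    moreover have "w' \<notin> orb u"
    proof
      assume "w' \<in> orb u"
      then obtain m where "w' = scale3 m u" unfolding orb_def by blast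
      then have "z = m*u1" "u2 = m*u2" by (simp_all add: w'_def scale3_def u)
      then show False using z nzu by auto
    qed
    ultimately show ?thesis using two_orb[OF uD w'D _ subX subX] by blast
  next
    case False
    define x where "x = u2/u1"
    define y where "y = u3/u1"
    define p where "p = v2/v1"
    define r where "r = v3/v1"
    have gu: "good x y" using nzu by (auto simp: good_def x_def y_def field_simps)
    have gv: "good p r" using nzv by (auto simp: good_def p_def r_def field_simps)
    have ne: "(x,y) \<noteq> (p,r)"
    proof
      assume "(x,y) = (p,r)"
      then have "v = scale3 (v1/u1) u" using nzu nzv
        by (auto simp: x_def y_def p_def r_def u v scale3_def field_simps)
      moreover have "v1/u1 \<noteq> 0" using nzu nzv by simp
      ultimately show False using False by (auto simp: orb_def)
    qed
    obtain g h g' h' where gg: "good g h" "good g' h'" "(g,h) \<noteq> (g',h')" "RR g h x y" "RR g h p r"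
      "RR g' h' x y" "RR g' h' p r" using core[OF tors gu gv ne] by blast
    have wD: "(1,g,h) \<in> Dq" "(1,g',h') \<in> Dq" using gg by (auto simp: Dq_iff good_def)
    have "(1,g,h) \<in> ext_ball_D u" using mem_eb[of u1 u2 u3 1 g h] uD u wD RR_agr[of u1 g h u2 u3] gg nzu
      by (simp add: x_def y_def)
    moreover have "(1,g,h) \<in> ext_ball_D v" using mem_eb[of v1 v2 v3 1 g h] vD v wD RR_agr[of v1 g h v2 v3] gg nzv
      by (simp add: p_def r_def)
    moreover have "(1,g',h') \<in> ext_ball_D u" using mem_eb[of u1 u2 u3 1 g' h'] uD u wD RR_agr[of u1 g' h' u2 u3] gg nzu
      by (simp add: x_def y_def)
    moreover have "(1,g',h') \<in> ext_ball_D v" using mem_eb[of v1 v2 v3 1 g' h'] vD v wD RR_agr[of v1 g' h' v2 v3] gg nzv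
      by (simp add: p_def r_def)
    moreover have "(1,g',h') \<notin> orb (1,g,h)"
    proof
      assume "(1,g',h') \<in> orb (1,g,h)"
      then obtain m where "(1,g',h') = scale3 m (1,g,h)" unfolding orb_def by blast
      then have "1 = m" "g' = m*g" "h' = m*h" by (simp_all add: scale3_def)
      then show False using gg by auto
    qed
    ultimately show ?thesis using two_orb[OF wD(1) wD(2) _ subX subX] by blast
  qed
qed



lemma scale3_eq: "(a,b,c) = scale3 m (a',b',c') \<longleftrightarrow> a = m*a' \<and> b = m*b' \<and> c = m*c'"
  by (simp add: scale3_def)

lemma orb_one: "(1,a,b) \<in> orb (1,a',b') \<Longrightarrow> a = (a'::'a::field)"
  by (auto simp: orb_def scale3_def)

lemma wit_char:
  fixes c :: "'a::field"
  assumes c: "c \<noteq> 0" "c \<noteq> 1" "c*c \<noteq> 1"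
    and w: "(w1,w2,w3) \<in> ext_ball_D (1,c,c*c) \<inter> ext_ball_D (1,c*c,c)"
  shows "w1 \<noteq> 0 \<and> ((w2 = c*c*c*w1 \<and> w3 = c*c*w1) \<or> (w2 = c*c*w1 \<and> w3 = c*c*c*w1))"
proof -
  have uD: "(1,c,c*c) \<in> Dq" "(1,c*c,c) \<in> Dq" using c by (auto simp: Dq_iff)
  have wD: "(w1,w2,w3) \<in> Dq" and a1: "agr3 w1 w2 w3 1 c (c*c)" and a2: "agr3 w1 w2 w3 1 (c*c) c"
    using w mem_eb[OF uD(1)] mem_eb[OF uD(2)] by auto
  have d: "w1 \<noteq> w2" "w2 \<noteq> w3" "w1 \<noteq> w3" "w1 \<noteq> 0" "w2 \<noteq> 0" "w3 \<noteq> 0" using wD by (auto simp: Dq_iff)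
  have A: "w2 = c*w1 \<or> w3 = c*w2 \<or> w3 = c*c*w1" using a1 c unfolding agr3_def
    by (auto simp: mult_ac)
  have B: "w2 = c*c*w1 \<or> w2 = c*w3 \<or> w3 = c*w1" using a2 c unfolding agr3_def
    by (auto simp: mult_ac)
  have cc: "c*c \<noteq> c" using c by auto
  from A B show ?thesis
  proof (elim disjE)
    assume "w2 = c*w1" "w2 = c*c*w1" then show ?thesis using d c cc by (auto simp: mult_ac)
  next
    assume "w2 = c*w1" "w2 = c*w3" then show ?thesis using d c by auto
  next
    assume "w2 = c*w1" "w3 = c*w1" then show ?thesis using d c by auto
  next
    assume "w3 = c*w2" "w2 = c*c*w1" then show ?thesis using d by (auto simp: mult_ac)
  next
    assume h: "w3 = c*w2" "w2 = c*w3"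
    then have "w3 = (c*c) * w3" by (simp add: mult_ac)
    then show ?thesis using d c by (metis mult_cancel_right2)
  next
    assume "w3 = c*w2" "w3 = c*w1" then show ?thesis using d c by auto
  next
    assume "w3 = c*c*w1" "w2 = c*c*w1" then show ?thesis using d c by auto
  next
    assume "w3 = c*c*w1" "w2 = c*w3" then show ?thesis using d by (auto simp: mult_ac)
  next
    assume "w3 = c*c*w1" "w3 = c*w1" then show ?thesis using d c cc by (auto simp: mult_ac)
  qed
qed

lemma wit_zero:
  fixes c :: "'a::field"
  assumes c: "c \<noteq> 0" "c \<noteq> 1" "c*c \<noteq> 1" "c*c*c = 1"
  shows "ext_ball_D (1,c,c*c) \<inter> ext_ball_D (1,c*c,c) = {}"
proof (rule ccontr)
  assume "ext_ball_D (1,c,c*c) \<inter> ext_ball_D (1,c*c,c) \<noteq> {}"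
  then obtain w1 w2 w3 where w: "(w1,w2,w3) \<in> ext_ball_D (1,c,c*c) \<inter> ext_ball_D (1,c*c,c)" by auto
  have uD: "(1,c,c*c) \<in> Dq" using c by (auto simp: Dq_iff)
  have wD: "(w1,w2,w3) \<in> Dq" using w mem_eb[OF uD] by auto
  then show False using wit_char[OF c(1-3) w] c(4) by (auto simp: Dq_iff)
qed

lemma wit_two:
  fixes c :: "'a::{finite,field}"
  assumes c: "c \<noteq> 0" "c \<noteq> 1" "c*c \<noteq> 1" "c*c*c \<noteq> 1"
  shows "card (ext_ball_D (1,c,c*c) \<inter> ext_ball_D (1,c*c,c)) = 2 * (CARD('a) - 1)"
proof -
  let ?X = "ext_ball_D (1,c,c*c) \<inter> ext_ball_D (1,c*c,c)"
  have uD: "(1,c,c*c) \<in> Dq" "(1,c*c,c) \<in> Dq" using c by (auto simp: Dq_iff)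
  have cc: "c*c \<noteq> c" "c*c*c \<noteq> c*c" "c*c*c \<noteq> 0" "c*c*c \<noteq> c" using c by auto
  have pD: "(1, c*c*c, c*c) \<in> Dq" "(1, c*c, c*c*c) \<in> Dq" using c cc by (auto simp: Dq_iff)
  have sub: "?X \<subseteq> orb (1, c*c*c, c*c) \<union> orb (1, c*c, c*c*c)"
  proof
    fix w assume "w \<in> ?X"
    moreover obtain w1 w2 w3 where w: "w = (w1,w2,w3)" by (cases w)
    ultimately have "(w1,w2,w3) \<in> ?X" by simp
    from wit_char[OF c(1-3) this]
    have nz: "w1 \<noteq> 0" and dd: "(w2 = c*c*c*w1 \<and> w3 = c*c*w1) \<or> (w2 = c*c*w1 \<and> w3 = c*c*c*w1)"
      by blast+
    from dd have "w = scale3 w1 (1,c*c*c,c*c) \<or> w = scale3 w1 (1,c*c,c*c*c)"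
    proof
      assume "w2 = c*c*c*w1 \<and> w3 = c*c*w1"
      then have "w = scale3 w1 (1,c*c*c,c*c)" by (simp add: w scale3_def mult_ac)
      then show ?thesis by (rule disjI1)
    next
      assume "w2 = c*c*w1 \<and> w3 = c*c*c*w1"
      then have "w = scale3 w1 (1,c*c,c*c*c)" by (simp add: w scale3_def mult_ac)
      then show ?thesis by (rule disjI2)
    qed
    with nz have "w \<in> orb (1, c*c*c, c*c) \<union> orb (1, c*c, c*c*c)" unfolding orb_def by blast
    then show "w \<in> orb (1, c*c*c, c*c) \<union> orb (1, c*c, c*c*c)"
      unfolding orb_def by blast
  qed
  have "card ?X \<le> card (orb (1, c*c*c, c*c) \<union> orb (1, c*c, c*c*c))" by (intro card_mono sub) auto
  also have "\<dots> \<le> card (orb (1, c*c*c, c*c)) + card (orb (1, c*c, c*c*c))" by (rule card_Un_le)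
  also have "\<dots> = 2 * (CARD('a) - 1)" using card_orb[OF pD(1)] card_orb[OF pD(2)] by simp
  finally have le: "card ?X \<le> 2 * (CARD('a) - 1)" .
  have m1: "(1, c*c*c, c*c) \<in> ?X" "(1, c*c, c*c*c) \<in> ?X"
    by (simp_all add: mem_eb[OF uD(1)] mem_eb[OF uD(2)] pD agr3_def)
  have no: "(1, c*c, c*c*c) \<notin> orb (1, c*c*c, c*c)"
    using orb_one[of "c*c" "c*c*c" "c*c*c" "c*c"] cc(2) by metis
  have o1: "orb (1, c*c*c, c*c) \<subseteq> ?X"
    using orb_sub[OF uD(1) m1(1)[THEN IntD1]] orb_sub[OF uD(2) m1(1)[THEN IntD2]] by (rule Int_greatest)
  have o2: "orb (1, c*c, c*c*c) \<subseteq> ?X"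
    using orb_sub[OF uD(1) m1(2)[THEN IntD1]] orb_sub[OF uD(2) m1(2)[THEN IntD2]] by (rule Int_greatest)
  have "2 * (CARD('a) - 1) \<le> card ?X"
    by (rule two_orb[OF pD(1) pD(2) no o1 o2])
  with le show ?thesis by simp
qed



lemma fermat:
  fixes x :: "'a::{finite,field}"
  assumes "x \<noteq> 0"
  shows "x ^ (CARD('a) - 1) = 1"
proof -
  have "(\<Prod>y\<in>UNIV-{0}. x * y) = x ^ card (UNIV - {0::'a}) * \<Prod>(UNIV-{0::'a})"
    by (simp add: prod.distrib)
  also have "card (UNIV - {0::'a}) = CARD('a) - 1" by (simp add: card_Diff_subset)
  also have "(\<Prod>y\<in>UNIV-{0}. x * y) = (\<Prod>y\<in>UNIV-{0::'a}. y)"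
    by (rule prod.reindex_bij_witness[of _ "\<lambda>y. y / x" "\<lambda>y. x * y"]) (use assms in auto)
  finally have "\<Prod>(UNIV-{0::'a}) * 1 = \<Prod>(UNIV-{0::'a}) * x ^ (CARD('a) - 1)" by (simp add: mult_ac)
  moreover have "\<Prod>(UNIV-{0::'a}) \<noteq> 0" by (simp add: prod_zero_iff)
  ultimately show ?thesis by (metis mult_left_cancel)
qed

lemma tors:
  fixes z :: "'a::{finite,field}"
  assumes n3: "\<not> 3 dvd (CARD('a) - 1)" and z: "z*z*z = 1"
  shows "z = 1"
proof -
  have z0: "z \<noteq> 0" using z by auto
  define n where "n = CARD('a) - 1"
  have "z ^ n = z ^ (3 * (n div 3) + n mod 3)" by (simp only: mult_div_mod_eq)
  also have "\<dots> = (z^3) ^ (n div 3) * z ^ (n mod 3)" by (simp only: power_add power_mult)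
  also have "z^3 = 1" using z by (simp add: power3_eq_cube)
  finally have e: "z ^ n = z ^ (n mod 3)" by simp
  have "z ^ n = 1" using fermat[OF z0] by (simp add: n_def)
  with e have zr: "z ^ (n mod 3) = 1" by simp
  have "n mod 3 = 1 \<or> n mod 3 = 2"
  proof -
    have "\<not> 3 dvd n" using n3 by (simp add: n_def)
    then show ?thesis by presburger
  qed
  then show ?thesis
  proof
    assume "n mod 3 = 1" then show ?thesis using zr by simp
  next
    assume "n mod 3 = 2"
    then have "z*z = 1" using zr by (simp add: power2_eq_square)
    with z show ?thesis by (metis mult_1_left)
  qed
qed

lemma cube_root:
  assumes d3: "3 dvd (CARD('a::{finite,field}) - 1)" and q4: "CARD('a) \<ge> 4"
  shows "\<exists>c::'a. c*c*c = 1 \<and> c \<noteq> 1"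
proof (rule ccontr)
  assume "\<not> ?thesis"
  then have t: "\<And>c::'a. c*c*c = 1 \<Longrightarrow> c = 1" by blast
  define N where "N = (UNIV - {0::'a})"
  define m where "m = (CARD('a) - 1) div 3"
  have m1: "m \<ge> 1" using q4 d3 by (auto simp: m_def)
  have cN: "card N = 3 * m" using d3 by (simp add: N_def m_def card_Diff_subset)
  have inj: "inj_on (\<lambda>c. c^3) N"
  proof (rule inj_onI)
    fix a b assume ab: "a \<in> N" "b \<in> N" "a^3 = b^3"
    then have "(a/b)*(a/b)*(a/b) = 1" by (simp add: N_def field_simps power3_eq_cube)
    then have "a/b = 1" by (rule t)
    then show "a = b" using ab by (simp add: N_def)
  qed
  have sub: "(\<lambda>c. c^3) ` N \<subseteq> N" by (auto simp: N_def)
  have "card ((\<lambda>c. c^3) ` N) = card N" using inj by (simp add: card_image)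
  then have img: "(\<lambda>c. c^3) ` N = N" using sub by (intro card_subset_eq) (auto simp: N_def)
  have roots: "N \<subseteq> {y. poly (monom 1 m - 1) y = 0}"
  proof
    fix y assume "y \<in> N"
    then obtain c where c: "c \<in> N" "y = c^3" using img by (metis imageE)
    have "y ^ m = c ^ (3*m)" by (simp add: c power_mult)
    also have "3 * m = CARD('a) - 1" using d3 by (simp add: m_def)
    also have "c ^ (CARD('a) - 1) = 1" using c by (intro fermat) (simp add: N_def)
    finally show "y \<in> {y. poly (monom 1 m - 1) y = 0}" by (simp add: poly_monom)
  qed
  have p0: "monom (1::'a) m - 1 \<noteq> 0"
  proof
    assume "monom (1::'a) m - 1 = 0"
    then have "poly (monom (1::'a) m - 1) 0 = 0" by simp
    then show False using m1 by (simp add: poly_monom power_0_left)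
  qed
  have "card N \<le> card {y. poly (monom (1::'a) m - 1) y = 0}" by (intro card_mono roots) simp
  also have "\<dots> \<le> degree (monom (1::'a) m - 1)" by (rule card_poly_roots_bound[OF p0])
  also have "\<dots> \<le> m" by (intro degree_diff_le) (auto simp: degree_monom_le)
  finally show False using cN m1 by simp
qed

lemma exists_c:
  assumes q4: "CARD('a::{finite,field}) \<ge> 4"
  shows "\<exists>c::'a. c \<noteq> 0 \<and> c \<noteq> 1 \<and> c*c \<noteq> 1"
proof -
  have "\<not> (UNIV \<subseteq> {0, 1, -1::'a})"
  proof
    assume "UNIV \<subseteq> {0, 1, -1::'a}"
    then have "CARD('a) \<le> card {0, 1, -1::'a}" by (intro card_mono) auto
    also have "\<dots> \<le> 3" using card_length[of "[0,1,-1::'a]"] by simp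
    finally show False using q4 by simp
  qed
  then obtain c :: 'a where c: "c \<noteq> 0" "c \<noteq> 1" "c \<noteq> -1" by blast
  have "c*c \<noteq> 1"
  proof
    assume "c*c = 1"
    then have "(c - 1) * (c + 1) = 0" by (simp add: algebra_simps)
    then show False using c by (auto simp: add_eq_0_iff2)
  qed
  with c show ?thesis by blast
qed



theorem theorem1:
  assumes "CARD('a) \<ge> 4"
  shows "theta (Dq :: ('a::{finite, field}) vec3 set) ext_ball_D =
           (if (CARD('a) - 1) mod 3 \<noteq> 0 then 2 * (CARD('a) - 1) else 0)"
proof -
  let ?S = "{card (ext_ball_D i \<inter> ext_ball_D j) | i j. i \<in> (Dq::'a vec3 set) \<and> j \<in> Dq \<and> i \<noteq> j}"
  have th: "theta (Dq :: 'a vec3 set) ext_ball_D = Min ?S" by (simp add: theta_def)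
  have "?S \<subseteq> {..card (UNIV :: 'a vec3 set)}"
  proof
    fix k assume "k \<in> ?S"
    then obtain i j where k: "k = card (ext_ball_D i \<inter> ext_ball_D (j::'a vec3))" by blast
    have "k \<le> card (UNIV :: 'a vec3 set)" unfolding k by (intro card_mono) auto
    then show "k \<in> {..card (UNIV :: 'a vec3 set)}" by simp
  qed
  then have fin: "finite ?S" by (rule finite_subset) simp
  have wD: "(1,c,c*c) \<in> (Dq::'a vec3 set) \<and> (1,c*c,c) \<in> (Dq::'a vec3 set) \<and> (1,c,c*c) \<noteq> (1,c*c,c)"
    if "c \<noteq> 0" "c \<noteq> 1" "c*c \<noteq> 1" for c :: 'a
    using that by (auto simp: Dq_iff)
  have mem: "card (ext_ball_D i \<inter> ext_ball_D j) \<in> ?S"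
    if "i \<in> (Dq::'a vec3 set)" "j \<in> Dq" "i \<noteq> j" for i j
    using that by blast
  show ?thesis
  proof (cases "(CARD('a) - 1) mod 3 = 0")
    case True
    then have "3 dvd (CARD('a) - 1)" by presburger
    then obtain c :: 'a where c: "c*c*c = 1" "c \<noteq> 1" using cube_root assms by blast
    have c0: "c \<noteq> 0" using c by auto
    have cc: "c*c \<noteq> 1"
    proof
      assume "c*c = 1"
      with c(1) have "c = 1" by (metis mult_1_left)
      with c(2) show False by simp
    qed
    have e0: "card (ext_ball_D (1,c,c*c) \<inter> ext_ball_D (1,c*c,c)) = 0"
      using wit_zero[OF c0 c(2) cc c(1)] by simp
    have "card (ext_ball_D (1,c,c*c) \<inter> ext_ball_D (1,c*c,c)) \<in> ?S"
      using wD[OF c0 c(2) cc] by (intro mem) auto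
    then have "0 \<in> ?S" by (simp only: e0)
    then have "Min ?S = 0" by (intro Min_eqI fin) auto
    then show ?thesis using th True by simp
  next
    case False
    then have n3: "\<not> 3 dvd (CARD('a) - 1)" by presburger
    have q5: "CARD('a) \<ge> 5" using assms n3 by (cases "CARD('a) = 4") auto
    obtain c :: 'a where c: "c \<noteq> 0" "c \<noteq> 1" "c*c \<noteq> 1" using exists_c assms by blast
    have c3: "c*c*c \<noteq> 1" using tors[OF n3] c(2) by blast
    have e2: "card (ext_ball_D (1,c,c*c) \<inter> ext_ball_D (1,c*c,c)) = 2 * (CARD('a) - 1)"
      by (rule wit_two[OF c c3])
    have "card (ext_ball_D (1,c,c*c) \<inter> ext_ball_D (1,c*c,c)) \<in> ?S"
      using wD[OF c] by (intro mem) auto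
    then have inS: "2 * (CARD('a) - 1) \<in> ?S" by (simp only: e2)
    have lb: "2 * (CARD('a) - 1) \<le> k" if "k \<in> ?S" for k
    proof -
      from that obtain i j where ij: "i \<in> (Dq::'a vec3 set)" "j \<in> Dq" "i \<noteq> j"
        and k: "k = card (ext_ball_D i \<inter> ext_ball_D j)" by blast
      show ?thesis unfolding k by (rule lower[OF tors[OF n3] q5 ij])
    qed
    have "Min ?S = 2 * (CARD('a) - 1)" by (intro Min_eqI fin lb inS)
    then show ?thesis using th False by simp
  qed
qed


end
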